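(* (a) Let $\{U_\alpha\}$ ($U_\alpha=gE_\alpha g^{-1}$, $g\in G_{<0}$) be a solution of the $(\mathrm{sl}_n(\mathbb{C}),\mathfrak{t})$-hierarchy and set $A_{m\alpha}:=\pi_{\geqslant0}(U_\alpha z^m)-U_\alpha z^m$ for $m\ge0$. Then for all $m_1,m_2\ge0$ and all $\alpha_1,\alpha_2$: $$\partial_{m_1\alpha_1}(A_{m_2\alpha_2})-\partial_{m_2\alpha_2}(A_{m_1\alpha_1})-[A_{m_1\alpha_1},A_{m_2\alpha_2}]=0.$$ (b) Let $\{V_\beta\}$ ($V_\beta=KE_\beta zK^{-1}$, $K\in G_{\leqslant0}$) be a solution of the strict $(\mathrm{sl}_n(\mathbb{C}),\mathfrak{t})$-hierarchy and set $D_{m\beta}:=\pi_{>0}(V_\beta z^{m-1})-V_\beta z^{m-1}$ for $m\ge1$. Then for all $m_1,m_2\ge1$ and all $\beta_1,\beta_2$: $$\partial_{m_1\beta_1}(D_{m_2\beta_2})-\partial_{m_2\beta_2}(D_{m_1\beta_1})-[D_{m_1\beta_1},D_{m_2\beta_2}]=0.$$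
   Context: $R$ is a commutative $\mathbb{C}$-algebra; $\mathrm{gl}_n(R)[z,z^{-1})$ is the algebra of formal series $\sum_{i=-\infty}^{N}X_iz^i$, $X_i\in\mathrm{gl}_n(R)$, bracket $[X,Y]=\sum[X_i,Y_j]z^{i+j}$; $\pi_{\geqslant0}$ (resp. $\pi_{>0}$) keeps the terms with $i\ge0$ (resp. $i\ge1$). $\mathfrak{t}\subset\mathrm{sl}_n(\mathbb{C})$ is commutative of maximal dimension $r$ with basis $E_1,\dots,E_r$. $G_{<0}=\{\mathrm{Id}+\sum_{i\ge1}Y_iz^{-i}\}$, $G_{\leqslant0}=\{\sum_{j\ge0}K_jz^{-j}\mid K_0\text{ invertible}\}$ (coefficients in $\mathrm{gl}_n(R)$). $R$ carries commuting $\mathbb{C}$-linear derivations $\partial_{m\alpha}$ ($m\ge0$ in (a), $m\ge1$ in (b), $1\le\alpha\le r$), acting coefficientwise. A solution of the $(\mathrm{sl}_n(\mathbb{C}),\mathfrak{t})$-hierarchy means $\partial_{m\alpha_1}(U_{\alpha_2})=[\pi_{\geqslant0}(U_{\alpha_1}z^m),U_{\alpha_2}]$ for all $m\ge0$, $\alpha_1,\alpha_2$; a solution of the strict hierarchy means $\partial_{m\beta_1}(V_{\beta_2})=[\pi_{>0}(V_{\beta_1}z^{m-1}),V_{\beta_2}]$ for all $m\ge1$, $\beta_1,\beta_2$. *)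

theory Defs
  imports Complex_Main
begin

type_synonym ('a, 'n) mat = "'n \<Rightarrow> 'n \<Rightarrow> 'a"

definition mzero :: "('a::zero, 'n) mat" where
  "mzero = (\<lambda>i j. 0)"

definition mone :: "('a::{zero,one}, 'n) mat" where
  "mone = (\<lambda>i j. if i = j then 1 else 0)"

definition madd :: "('a::plus, 'n) mat \<Rightarrow> ('a, 'n) mat \<Rightarrow> ('a, 'n) mat" where
  "madd A B = (\<lambda>i j. A i j + B i j)"

definition msub :: "('a::minus, 'n) mat \<Rightarrow> ('a, 'n) mat \<Rightarrow> ('a, 'n) mat" where
  "msub A B = (\<lambda>i j. A i j - B i j)"

definition msmult :: "'a::times \<Rightarrow> ('a, 'n) mat \<Rightarrow> ('a, 'n) mat" where
  "msmult c A = (\<lambda>i j. c * A i j)"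

definition mmul :: "('a::comm_ring_1, 'n::finite) mat \<Rightarrow> ('a, 'n) mat \<Rightarrow> ('a, 'n) mat" where
  "mmul A B = (\<lambda>i j. \<Sum>k\<in>UNIV. A i k * B k j)"

definition mtrace :: "('a::comm_ring_1, 'n::finite) mat \<Rightarrow> 'a" where
  "mtrace A = (\<Sum>i\<in>UNIV. A i i)"

definition minvertible :: "('a::comm_ring_1, 'n::finite) mat \<Rightarrow> bool" where
  "minvertible A \<longleftrightarrow> (\<exists>B. mmul A B = mone \<and> mmul B A = mone)"

definition map_mat :: "('a \<Rightarrow> 'b) \<Rightarrow> ('a, 'n) mat \<Rightarrow> ('b, 'n) mat" where
  "map_mat f A = (\<lambda>i j. f (A i j))"

definition sl :: "(complex, 'n::finite) mat set" where
  "sl = {M. mtrace M = 0}"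

definition csubspace :: "(complex, 'n::finite) mat set \<Rightarrow> bool" where
  "csubspace S \<longleftrightarrow> mzero \<in> S \<and> (\<forall>A\<in>S. \<forall>B\<in>S. madd A B \<in> S)
     \<and> (\<forall>c. \<forall>A\<in>S. msmult c A \<in> S)"

definition comm_subalg :: "(complex, 'n::finite) mat set \<Rightarrow> bool" where
  "comm_subalg S \<longleftrightarrow> csubspace S \<and> S \<subseteq> sl \<and> (\<forall>A\<in>S. \<forall>B\<in>S. mmul A B = mmul B A)"

definition maximal_comm_subalg :: "(complex, 'n::finite) mat set \<Rightarrow> bool" where
  "maximal_comm_subalg T \<longleftrightarrow> comm_subalg T \<and> (\<forall>S. comm_subalg S \<and> T \<subseteq> S \<longrightarrow> S = T)"

definition lincomb :: "(nat \<Rightarrow> complex) \<Rightarrow> (nat \<Rightarrow> (complex, 'n) mat) \<Rightarrow> nat \<Rightarrow> (complex, 'n) mat" where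
  "lincomb c E r = (\<lambda>i j. \<Sum>\<alpha>=1..r. c \<alpha> * E \<alpha> i j)"

definition is_basis :: "(nat \<Rightarrow> (complex, 'n) mat) \<Rightarrow> nat \<Rightarrow> (complex, 'n) mat set \<Rightarrow> bool" where
  "is_basis E r T \<longleftrightarrow> T = {lincomb c E r | c. True}
     \<and> (\<forall>c. lincomb c E r = mzero \<longrightarrow> (\<forall>\<alpha>\<in>{1..r}. c \<alpha> = 0))"

text \<open>A series \<Sum>_{i \<le> N} X_i z^i is represented by its coefficient function.\<close>
type_synonym ('a, 'n) ser = "int \<Rightarrow> ('a, 'n) mat"

definition is_ser :: "('a::zero, 'n) ser \<Rightarrow> bool" where
  "is_ser X \<longleftrightarrow> (\<exists>N. \<forall>i>N. X i = mzero)"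

text \<open>product: the coefficient of z^k is the (finite, for series bounded above) sum
  of X_i Y_{k-i}\<close>
definition smul :: "('a::comm_ring_1, 'n::finite) ser \<Rightarrow> ('a, 'n) ser \<Rightarrow> ('a, 'n) ser" where
  "smul X Y = (\<lambda>k a b. \<Sum>i\<in>{i. X i \<noteq> mzero \<and> Y (k - i) \<noteq> mzero}. mmul (X i) (Y (k - i)) a b)"

definition ssub :: "('a::comm_ring_1, 'n) ser \<Rightarrow> ('a, 'n) ser \<Rightarrow> ('a, 'n) ser" where
  "ssub X Y = (\<lambda>k. msub (X k) (Y k))"

definition szero :: "('a::comm_ring_1, 'n) ser" where
  "szero = (\<lambda>k. mzero)"

definition sone :: "('a::comm_ring_1, 'n) ser" where
  "sone = (\<lambda>k. if k = 0 then mone else mzero)"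

definition sconst :: "('a::comm_ring_1, 'n) mat \<Rightarrow> ('a, 'n) ser" where
  "sconst A = (\<lambda>k. if k = 0 then A else mzero)"

definition sbr :: "('a::comm_ring_1, 'n::finite) ser \<Rightarrow> ('a, 'n) ser \<Rightarrow> ('a, 'n) ser" where
  "sbr X Y = ssub (smul X Y) (smul Y X)"

definition zpow :: "('a, 'n) ser \<Rightarrow> int \<Rightarrow> ('a, 'n) ser" where
  "zpow X m = (\<lambda>k. X (k - m))"

definition pi_ge0 :: "('a::zero, 'n) ser \<Rightarrow> ('a, 'n) ser" where
  "pi_ge0 X = (\<lambda>k. if k \<ge> 0 then X k else mzero)"

definition pi_gt0 :: "('a::zero, 'n) ser \<Rightarrow> ('a, 'n) ser" where
  "pi_gt0 X = (\<lambda>k. if k > 0 then X k else mzero)"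

definition sder :: "('a \<Rightarrow> 'a) \<Rightarrow> ('a, 'n) ser \<Rightarrow> ('a, 'n) ser" where
  "sder d X = (\<lambda>k a b. d (X k a b))"

definition G_lt0 :: "('a::comm_ring_1, 'n::finite) ser \<Rightarrow> bool" where
  "G_lt0 g \<longleftrightarrow> g 0 = mone \<and> (\<forall>i>0. g i = mzero)"

definition G_le0 :: "('a::comm_ring_1, 'n::finite) ser \<Rightarrow> bool" where
  "G_le0 K \<longleftrightarrow> (\<forall>i>0. K i = mzero) \<and> minvertible (K 0)"

definition is_sinv :: "('a::comm_ring_1, 'n::finite) ser \<Rightarrow> ('a, 'n) ser \<Rightarrow> bool" where
  "is_sinv G Ginv \<longleftrightarrow> is_ser Ginv \<and> smul G Ginv = sone \<and> smul Ginv G = sone"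

text \<open>emb is the structure map C \<rightarrow> R of the C-algebra R\<close>
definition calg_hom :: "(complex \<Rightarrow> 'a::comm_ring_1) \<Rightarrow> bool" where
  "calg_hom emb \<longleftrightarrow> emb 0 = 0 \<and> emb 1 = 1 \<and> (\<forall>x y. emb (x + y) = emb x + emb y)
     \<and> (\<forall>x y. emb (x * y) = emb x * emb y)"

definition C_derivation :: "(complex \<Rightarrow> 'a::comm_ring_1) \<Rightarrow> ('a \<Rightarrow> 'a) \<Rightarrow> bool" where
  "C_derivation emb D \<longleftrightarrow> (\<forall>x y. D (x + y) = D x + D y)
     \<and> (\<forall>c x. D (emb c * x) = emb c * D x)
     \<and> (\<forall>x y. D (x * y) = x * D y + D x * y)"

definition comm_derivations ::
  "(complex \<Rightarrow> 'a::comm_ring_1) \<Rightarrow> (nat \<Rightarrow> nat \<Rightarrow> 'a \<Rightarrow> 'a) \<Rightarrow> nat set \<Rightarrow> nat \<Rightarrow> bool" where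
  "comm_derivations emb d M r \<longleftrightarrow>
     (\<forall>m\<in>M. \<forall>\<alpha>\<in>{1..r}. C_derivation emb (d m \<alpha>))
     \<and> (\<forall>m1\<in>M. \<forall>a1\<in>{1..r}. \<forall>m2\<in>M. \<forall>a2\<in>{1..r}. \<forall>x.
          d m1 a1 (d m2 a2 x) = d m2 a2 (d m1 a1 x))"

definition Uop :: "(complex \<Rightarrow> 'a::comm_ring_1) \<Rightarrow> (nat \<Rightarrow> (complex, 'n::finite) mat)
    \<Rightarrow> ('a, 'n) ser \<Rightarrow> ('a, 'n) ser \<Rightarrow> nat \<Rightarrow> ('a, 'n) ser" where
  "Uop emb E g ginv \<alpha> = smul (smul g (sconst (map_mat emb (E \<alpha>)))) ginv"

definition Vop :: "(complex \<Rightarrow> 'a::comm_ring_1) \<Rightarrow> (nat \<Rightarrow> (complex, 'n::finite) mat)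
    \<Rightarrow> ('a, 'n) ser \<Rightarrow> ('a, 'n) ser \<Rightarrow> nat \<Rightarrow> ('a, 'n) ser" where
  "Vop emb E K Kinv \<beta> = smul (smul K (zpow (sconst (map_mat emb (E \<beta>))) 1)) Kinv"

definition hierarchy_solution ::
  "nat \<Rightarrow> (nat \<Rightarrow> nat \<Rightarrow> 'a \<Rightarrow> 'a) \<Rightarrow> (nat \<Rightarrow> ('a::comm_ring_1, 'n::finite) ser) \<Rightarrow> bool" where
  "hierarchy_solution r d U \<longleftrightarrow>
     (\<forall>m. \<forall>a1\<in>{1..r}. \<forall>a2\<in>{1..r}.
        sder (d m a1) (U a2) = sbr (pi_ge0 (zpow (U a1) (int m))) (U a2))"

definition strict_hierarchy_solution ::
  "nat \<Rightarrow> (nat \<Rightarrow> nat \<Rightarrow> 'a \<Rightarrow> 'a) \<Rightarrow> (nat \<Rightarrow> ('a::comm_ring_1, 'n::finite) ser) \<Rightarrow> bool" where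
  "strict_hierarchy_solution r d V \<longleftrightarrow>
     (\<forall>m\<ge>1. \<forall>b1\<in>{1..r}. \<forall>b2\<in>{1..r}.
        sder (d m b1) (V b2) = sbr (pi_gt0 (zpow (V b1) (int m - 1))) (V b2))"

end

theory Submission
  imports Defs "HOL-Library.Function_Algebras"
begin

lemma mzero_eq: "mzero = 0" by (simp add: mzero_def fun_eq_iff)
lemma szero_eq: "szero = 0" by (simp add: szero_def mzero_def fun_eq_iff)
lemma ssub_eq: "ssub X Y = X - Y" by (simp add: ssub_def msub_def fun_eq_iff)
lemma sbr_eq: "sbr X Y = smul X Y - smul Y X" by (simp add: sbr_def ssub_eq)

lemma mmul_zero_left[simp]: "mmul 0 B = 0" by (simp add: mmul_def fun_eq_iff)
lemma mmul_zero_right[simp]: "mmul A 0 = 0" by (simp add: mmul_def fun_eq_iff)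
lemma mmul_diff_left: "mmul (A - B) C = mmul A C - mmul B C"
  by (simp add: mmul_def fun_eq_iff sum_subtractf algebra_simps)
lemma mmul_diff_right: "mmul A (B - C) = mmul A B - mmul A C"
  by (simp add: mmul_def fun_eq_iff sum_subtractf algebra_simps)

lemma sum_fun_app: "(sum f S) x = sum (\<lambda>i. f i x) S"
  by (induct S rule: infinite_finite_induct) auto

lemma diff_app[simp]: "(f - g) x = f x - g x" by simp

lemma smul_eq_sum:
  assumes "finite S" "\<And>i. i \<notin> S \<Longrightarrow> X i = 0 \<or> Y (k - i) = 0"
  shows "smul X Y k = (\<Sum>i\<in>S. mmul (X i) (Y (k - i)))"
proof -
  have sub: "{i. X i \<noteq> mzero \<and> Y (k - i) \<noteq> mzero} \<subseteq> S" using assms(2) by (auto simp: mzero_eq)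
  have "(\<Sum>i\<in>{i. X i \<noteq> mzero \<and> Y (k - i) \<noteq> mzero}. mmul (X i) (Y (k - i)) a b)
      = (\<Sum>i\<in>S. mmul (X i) (Y (k - i)) a b)" for a b
    apply (rule sum.mono_neutral_left[OF assms(1) sub])
    by (auto simp: mzero_eq)
  thus ?thesis unfolding smul_def by (simp add: fun_eq_iff sum_fun_app)
qed

lemma is_ser_bound: "is_ser X \<Longrightarrow> \<exists>N. \<forall>i>N. X i = 0"
  by (auto simp: is_ser_def mzero_eq)

lemma is_serI: "(\<And>i. i > N \<Longrightarrow> X i = 0) \<Longrightarrow> is_ser X"
  by (auto simp: is_ser_def mzero_eq)

lemma supp_finite:
  assumes "is_ser X" "is_ser Y"
  shows "\<exists>S. finite S \<and> (\<forall>i. i \<notin> S \<longrightarrow> X i = 0 \<or> Y (k - i) = 0)"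
proof -
  obtain N M where N: "\<forall>i>N. X i = 0" and M: "\<forall>i>M. Y i = 0"
    using assms is_ser_bound by metis
  show ?thesis
    apply (rule exI[of _ "{k-M..N}"]) using N M by force
qed

lemma smul_diff_left:
  assumes "is_ser X" "is_ser Y" "is_ser Z"
  shows "smul (X - Y) Z = smul X Z - smul Y Z"
proof
  fix k
  obtain S1 where S1: "finite S1" "\<forall>i. i \<notin> S1 \<longrightarrow> X i = 0 \<or> Z (k - i) = 0"
    using supp_finite[OF assms(1,3)] by blast
  obtain S2 where S2: "finite S2" "\<forall>i. i \<notin> S2 \<longrightarrow> Y i = 0 \<or> Z (k - i) = 0"
    using supp_finite[OF assms(2,3)] by blast
  have e1: "smul X Z k = (\<Sum>i\<in>S1\<union>S2. mmul (X i) (Z (k - i)))"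
    by (rule smul_eq_sum) (use S1 S2 in auto)
  have e2: "smul Y Z k = (\<Sum>i\<in>S1\<union>S2. mmul (Y i) (Z (k - i)))"
    by (rule smul_eq_sum) (use S1 S2 in auto)
  have e3: "smul (X - Y) Z k = (\<Sum>i\<in>S1\<union>S2. mmul ((X - Y) i) (Z (k - i)))"
  proof (rule smul_eq_sum)
    fix i assume "i \<notin> S1 \<union> S2"
    then show "(X - Y) i = 0 \<or> Z (k - i) = 0" using S1(2)[rule_format, of i] S2(2)[rule_format, of i] by auto
  qed (use S1 S2 in auto)
  show "smul (X - Y) Z k = (smul X Z - smul Y Z) k"
    by (simp add: e1 e2 e3 mmul_diff_left sum_subtractf)
qed

lemma smul_diff_right:
  assumes "is_ser X" "is_ser Y" "is_ser Z"
  shows "smul X (Y - Z) = smul X Y - smul X Z"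
proof
  fix k
  obtain S1 where S1: "finite S1" "\<forall>i. i \<notin> S1 \<longrightarrow> X i = 0 \<or> Y (k - i) = 0"
    using supp_finite[OF assms(1,2)] by blast
  obtain S2 where S2: "finite S2" "\<forall>i. i \<notin> S2 \<longrightarrow> X i = 0 \<or> Z (k - i) = 0"
    using supp_finite[OF assms(1,3)] by blast
  have e1: "smul X Y k = (\<Sum>i\<in>S1\<union>S2. mmul (X i) (Y (k - i)))"
    by (rule smul_eq_sum) (use S1 S2 in auto)
  have e2: "smul X Z k = (\<Sum>i\<in>S1\<union>S2. mmul (X i) (Z (k - i)))"
    by (rule smul_eq_sum) (use S1 S2 in auto)
  have e3: "smul X (Y - Z) k = (\<Sum>i\<in>S1\<union>S2. mmul (X i) ((Y - Z) (k - i)))"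
  proof (rule smul_eq_sum)
    fix i assume "i \<notin> S1 \<union> S2"
    then show "X i = 0 \<or> (Y - Z) (k - i) = 0" using S1(2)[rule_format, of i] S2(2)[rule_format, of i] by auto
  qed (use S1 S2 in auto)
  show "smul X (Y - Z) k = (smul X Y - smul X Z) k"
    by (simp add: e1 e2 e3 mmul_diff_right sum_subtractf)
qed

lemma is_ser_diff: fixes X :: "('a::comm_ring_1,'n) ser" shows "is_ser X \<Longrightarrow> is_ser Y \<Longrightarrow> is_ser (X - Y)"
proof -
  assume "is_ser X" "is_ser Y"
  then obtain N M where "\<forall>i>N. X i = 0" "\<forall>i>M. Y i = 0" using is_ser_bound by metis
  thus ?thesis by (intro is_serI[of "max N M"]) auto
qed

lemma is_ser_smul: assumes "is_ser X" "is_ser Y" shows "is_ser (smul X Y)"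
proof -
  obtain N M where N: "\<forall>i>N. X i = 0" and M: "\<forall>i>M. Y i = 0" using assms is_ser_bound by metis
  show ?thesis
  proof (rule is_serI[of "N+M"])
    fix k assume k: "k > N + M"
    have "smul X Y k = (\<Sum>i\<in>{}. mmul (X i) (Y (k - i)))"
    proof (rule smul_eq_sum)
      fix i :: int show "X i = 0 \<or> Y (k - i) = 0" using N M k by (cases "i > N") auto
    qed auto
    thus "smul X Y k = 0" by simp
  qed
qed



lemma mmul_add_left: "mmul (A + B) C = mmul A C + mmul B C"
  by (simp add: mmul_def fun_eq_iff sum.distrib algebra_simps)
lemma mmul_add_right: "mmul A (B + C) = mmul A B + mmul A C"
  by (simp add: mmul_def fun_eq_iff sum.distrib algebra_simps)
lemma mmul_sum_left: "mmul (sum f S) C = (\<Sum>i\<in>S. mmul (f i) C)"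
  unfolding mmul_def fun_eq_iff by (auto simp: sum_fun_app sum_distrib_right intro: sum.swap)
lemma mmul_sum_right: "mmul C (sum f S) = (\<Sum>i\<in>S. mmul C (f i))"
  unfolding mmul_def fun_eq_iff by (auto simp: sum_fun_app sum_distrib_left intro: sum.swap)
lemma if10_mult: "(if P then 1 else 0) * (x::'a::comm_ring_1) = (if P then x else 0)" by simp
lemma if10_mult': "(x::'a::comm_ring_1) * (if P then 1 else 0) = (if P then x else 0)" by simp
lemma mmul_assoc: "mmul (mmul A B) C = mmul A (mmul B C)"
  unfolding mmul_def fun_eq_iff
  by (auto simp: sum_distrib_left sum_distrib_right mult.assoc intro: sum.swap)
lemma mmul_one_left[simp]: "mmul mone A = A"
  by (simp add: mmul_def mone_def fun_eq_iff if10_mult)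
lemma mmul_one_right[simp]: "mmul A mone = A"
  by (simp add: mmul_def mone_def fun_eq_iff if10_mult')

lemma smul_zero_beyond:
  assumes "\<forall>i>N. X i = 0" "\<forall>i>M. Y i = 0" "k > N + M"
  shows "smul X Y k = 0"
proof -
  have "smul X Y k = (\<Sum>i\<in>{}. mmul (X i) (Y (k - i)))"
  proof (rule smul_eq_sum)
    fix i :: int show "X i = 0 \<or> Y (k - i) = 0" using assms by (cases "i > N") auto
  qed auto
  thus ?thesis by simp
qed

lemma smul_assoc:
  assumes "is_ser X" "is_ser Y" "is_ser Z"
  shows "smul (smul X Y) Z = smul X (smul Y Z)"
proof
  fix k
  obtain N1 N2 N3 where h: "\<forall>i>N1. X i = 0" "\<forall>i>N2. Y i = 0" "\<forall>i>N3. Z i = 0"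
    using assms is_ser_bound by metis
  define N where "N = max N1 (max N2 N3)"
  have X0: "\<forall>i>N. X i = 0" and Y0: "\<forall>i>N. Y i = 0" and Z0: "\<forall>i>N. Z i = 0"
    using h by (auto simp: N_def)
  have XY0: "\<forall>j>2*N. smul X Y j = 0" using smul_zero_beyond[OF X0 Y0] by auto
  have YZ0: "\<forall>j>2*N. smul Y Z j = 0" using smul_zero_beyond[OF Y0 Z0] by auto
  define I where "I = {k-2*N..N}"
  define J where "J = {k-N..2*N}"
  have fI: "finite I" and fJ: "finite J" by (auto simp: I_def J_def)
  have L: "smul (smul X Y) Z k = (\<Sum>j\<in>J. mmul (smul X Y j) (Z (k - j)))"
  proof (rule smul_eq_sum[OF fJ])
    fix j assume "j \<notin> J" thus "smul X Y j = 0 \<or> Z (k - j) = 0" using XY0 Z0 by (auto simp: J_def)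
  qed
  have L2: "smul X Y j = (\<Sum>i\<in>I. mmul (X i) (Y (j - i)))" if "j \<in> J" for j
  proof (rule smul_eq_sum[OF fI])
    fix i assume "i \<notin> I" thus "X i = 0 \<or> Y (j - i) = 0" using X0 Y0 that by (auto simp: I_def J_def)
  qed
  have R: "smul X (smul Y Z) k = (\<Sum>i\<in>I. mmul (X i) (smul Y Z (k - i)))"
  proof (rule smul_eq_sum[OF fI])
    fix i assume "i \<notin> I" thus "X i = 0 \<or> smul Y Z (k - i) = 0" using X0 YZ0 by (auto simp: I_def)
  qed
  have R2: "smul Y Z (k - i) = (\<Sum>j\<in>J. mmul (Y (j - i)) (Z (k - j)))" if "i \<in> I" for i
  proof -
    have inj: "inj_on (\<lambda>j. j - i) J" by (auto simp: inj_on_def)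
    have "smul Y Z (k - i) = (\<Sum>l\<in>(\<lambda>j. j - i) ` J. mmul (Y l) (Z (k - i - l)))"
    proof (rule smul_eq_sum)
      fix l assume l: "l \<notin> (\<lambda>j. j - i) ` J"
      have "l + i \<notin> J" proof assume "l + i \<in> J" hence "l = (l + i) - i \<and> l + i \<in> J" by simp
        thus False using l by blast qed
      thus "Y l = 0 \<or> Z (k - i - l) = 0" using Y0 Z0 that by (auto simp: I_def J_def)
    qed (use fJ in auto)
    also have "\<dots> = (\<Sum>j\<in>J. mmul (Y (j - i)) (Z (k - j)))"
      by (simp add: sum.reindex[OF inj])
    finally show ?thesis .
  qed
  have "smul (smul X Y) Z k = (\<Sum>j\<in>J. \<Sum>i\<in>I. mmul (mmul (X i) (Y (j - i))) (Z (k - j)))"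
    by (simp add: L L2 mmul_sum_left cong: sum.cong)
  also have "\<dots> = (\<Sum>i\<in>I. \<Sum>j\<in>J. mmul (X i) (mmul (Y (j - i)) (Z (k - j))))"
    by (subst sum.swap) (simp add: mmul_assoc)
  also have "\<dots> = smul X (smul Y Z) k"
    by (simp add: R R2 mmul_sum_right cong: sum.cong)
  finally show "smul (smul X Y) Z k = smul X (smul Y Z) k" .
qed

lemma smul_sone_left[simp]: "smul sone X = X"
proof
  fix k
  have "smul sone X k = (\<Sum>i\<in>{0}. mmul (sone i) (X (k - i)))"
    by (rule smul_eq_sum) (auto simp: sone_def mzero_eq)
  thus "smul sone X k = X k" by (simp add: sone_def)
qed

lemma smul_sone_right[simp]: "smul X sone = X"
proof
  fix k
  have "smul X sone k = (\<Sum>i\<in>{k}. mmul (X i) (sone (k - i)))"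
    by (rule smul_eq_sum) (auto simp: sone_def mzero_eq)
  thus "smul X sone k = X k" by (simp add: sone_def)
qed

lemma smul_sconst: "smul (sconst A) (sconst B) = sconst (mmul A B)"
proof
  fix k
  have "smul (sconst A) (sconst B) k = (\<Sum>i\<in>{0}. mmul (sconst A i) (sconst B (k - i)))"
    by (rule smul_eq_sum) (auto simp: sconst_def mzero_eq)
  thus "smul (sconst A) (sconst B) k = sconst (mmul A B) k" by (simp add: sconst_def mzero_eq)
qed

lemma is_ser_sconst: "is_ser (sconst A)" by (rule is_serI[of 0]) (auto simp: sconst_def mzero_eq)
lemma is_ser_sone: "is_ser sone" by (rule is_serI[of 0]) (auto simp: sone_def mzero_eq)
lemma is_ser_zpow: "is_ser X \<Longrightarrow> is_ser (zpow X m)"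
  by (metis is_serI is_ser_bound zpow_def add.commute less_diff_eq)

lemma zpow_smul_right: "zpow (smul X Y) m = smul X (zpow Y m)"
  by (simp add: zpow_def smul_def fun_eq_iff algebra_simps)

lemma zpow_smul_left: "zpow (smul X Y) m = smul (zpow X m) Y"
proof (rule ext)+
  fix k a b
  have inj: "inj (\<lambda>i. i + m)" by (auto simp: inj_on_def)
  have img: "{i. X (i - m) \<noteq> mzero \<and> Y (k - i) \<noteq> mzero} = (\<lambda>i. i + m) ` {i. X i \<noteq> mzero \<and> Y (k - m - i) \<noteq> mzero}"
    by (auto simp: image_iff algebra_simps intro!: exI[of _ "_ - m"])
  show "zpow (smul X Y) m k a b = smul (zpow X m) Y k a b"
    unfolding zpow_def smul_def img
    by (subst sum.reindex) (auto simp: inj_on_def algebra_simps)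
qed

lemma zpow_diff: "zpow (X - Y) m = zpow X m - zpow Y m" by (simp add: zpow_def fun_eq_iff)
lemma zpow_zpow: "zpow (zpow X a) b = zpow X (a + b)" by (simp add: zpow_def algebra_simps)



lemma zero_curv:
  fixes P :: "('a::comm_ring_1,'n::finite) ser \<Rightarrow> ('a,'n) ser"
  assumes Plin: "\<And>X Y. P (X - Y) = P X - P Y"
  and Pser: "\<And>X. is_ser X \<Longrightarrow> is_ser (P X)"
  and Pplus: "\<And>X Y. P (smul (P X) (P Y)) = smul (P X) (P Y)"
  and Pminus: "\<And>X Y. P (smul (P X - X) (P Y - Y)) = 0"
  and D1lin: "\<And>X Y. D1 (X - Y) = D1 X - D1 Y" and D1P: "\<And>X. D1 (P X) = P (D1 X)"
  and D2lin: "\<And>X Y. D2 (X - Y) = D2 X - D2 Y" and D2P: "\<And>X. D2 (P X) = P (D2 X)"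
  and W: "is_ser W1" "is_ser W2"
  and comm: "smul W1 W2 = smul W2 W1"
  and h1: "D1 W2 = smul (P W1) W2 - smul W2 (P W1)"
  and h2: "D2 W1 = smul (P W2) W1 - smul W1 (P W2)"
  shows "D1 (P W2 - W2) - D2 (P W1 - W1)
     - (smul (P W1 - W1) (P W2 - W2) - smul (P W2 - W2) (P W1 - W1)) = 0"
proof -
  have Padd: "P (X + Y) = P X + P Y" for X Y
    using Plin[of "X + Y" Y] by (simp add: algebra_simps)
  define B1 where "B1 = P W1"
  define B2 where "B2 = P W2"
  define A1 where "A1 = P W1 - W1"
  define A2 where "A2 = P W2 - W2"
  have sB1: "is_ser B1" and sB2: "is_ser B2" using W Pser by (auto simp: B1_def B2_def)
  have sA1: "is_ser A1" and sA2: "is_ser A2" using W Pser is_ser_diff by (auto simp: A1_def A2_def)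
  have W1e: "W1 = B1 - A1" and W2e: "W2 = B2 - A2" by (simp_all add: A1_def A2_def B1_def B2_def)
  define p11 where "p11 = smul B1 B2"
  define q11 where "q11 = smul B2 B1"
  define p12 where "p12 = smul B1 A2"
  define q12 where "q12 = smul A2 B1"
  define p21 where "p21 = smul A1 B2"
  define q21 where "q21 = smul B2 A1"
  define p22 where "p22 = smul A1 A2"
  define q22 where "q22 = smul A2 A1"
  note sm = smul_diff_left smul_diff_right
  have h1': "D1 W2 = p11 - p12 - q11 + q12"
    using h1 unfolding B1_def[symmetric] W2e
    by (simp add: smul_diff_left[OF sB2 sA2 sB1] smul_diff_right[OF sB1 sB2 sA2] p11_def p12_def q11_def q12_def)
  have h2': "D2 W1 = q11 - q21 - p11 + p21"
    using h2 unfolding B2_def[symmetric] W1e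
    by (simp add: smul_diff_left[OF sB1 sA1 sB2] smul_diff_right[OF sB2 sB1 sA1] p11_def p21_def q11_def q21_def)
  have comm': "p11 - p12 - p21 + p22 = q11 - q21 - q12 + q22"
    using comm unfolding W1e W2e
    by (simp add: smul_diff_left smul_diff_right sB1 sB2 sA1 sA2 is_ser_diff p11_def p12_def p21_def p22_def q11_def q12_def q21_def q22_def algebra_simps)
  have P11: "P p11 = p11" "P q11 = q11" using Pplus by (simp_all add: p11_def q11_def B1_def B2_def)
  have P22: "P p22 = 0" "P q22 = 0" using Pminus by (simp_all add: p22_def q22_def A1_def A2_def)
  have Pcomm: "P p21 = p11 - P p12 - q11 + P q21 + P q12"
    using arg_cong[OF comm', of P] by (simp add: Plin Padd P11 P22 algebra_simps)
  have p22e: "p22 = q11 - q21 - q12 + q22 - p11 + p12 + p21"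
    using comm' by (simp add: algebra_simps)
  have eA2: "D1 A2 = p12 + P q12 - q12 - P p12"
    unfolding A2_def by (simp add: D1lin D1P h1' Plin Padd P11 algebra_simps)
  have eA1: "D2 A1 = p11 + q21 + P q12 - p21 - q11 - P p12"
    unfolding A1_def by (simp add: D2lin D2P h2' Plin Padd P11 Pcomm algebra_simps)
  show ?thesis
    unfolding A1_def[symmetric] A2_def[symmetric] p22_def[symmetric] q22_def[symmetric]
    by (simp add: eA1 eA2 p22e algebra_simps)
qed



lemma smul_zero_at: "(\<And>i. X i = 0 \<or> Y (k - i) = 0) \<Longrightarrow> smul X Y k = 0"
  using smul_eq_sum[of "{}" X Y k] by auto

lemma pi_ge0_diff: "pi_ge0 (X - Y) = pi_ge0 X - pi_ge0 (Y::('a::comm_ring_1,'n) ser)"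
  by (simp add: pi_ge0_def fun_eq_iff mzero_eq)
lemma pi_gt0_diff: "pi_gt0 (X - Y) = pi_gt0 X - pi_gt0 (Y::('a::comm_ring_1,'n) ser)"
  by (simp add: pi_gt0_def fun_eq_iff mzero_eq)
lemma pi_ge0_ser: "is_ser X \<Longrightarrow> is_ser (pi_ge0 X)"
  unfolding is_ser_def pi_ge0_def by auto
lemma pi_gt0_ser: "is_ser X \<Longrightarrow> is_ser (pi_gt0 X)"
  unfolding is_ser_def pi_gt0_def by auto

lemma pi_ge0_plus: "pi_ge0 (smul (pi_ge0 X) (pi_ge0 Y)) = smul (pi_ge0 X) (pi_ge0 (Y::('a::comm_ring_1,'n::finite) ser))"
proof
  fix k show "pi_ge0 (smul (pi_ge0 X) (pi_ge0 Y)) k = smul (pi_ge0 X) (pi_ge0 Y) k"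
  proof (cases "k \<ge> 0")
    case False
    have "smul (pi_ge0 X) (pi_ge0 Y) k = 0"
      by (rule smul_zero_at) (use False in \<open>auto simp: pi_ge0_def mzero_eq\<close>)
    thus ?thesis using False by (simp add: pi_ge0_def mzero_eq)
  qed (simp add: pi_ge0_def)
qed

lemma pi_gt0_plus: "pi_gt0 (smul (pi_gt0 X) (pi_gt0 Y)) = smul (pi_gt0 X) (pi_gt0 (Y::('a::comm_ring_1,'n::finite) ser))"
proof
  fix k show "pi_gt0 (smul (pi_gt0 X) (pi_gt0 Y)) k = smul (pi_gt0 X) (pi_gt0 Y) k"
  proof (cases "k > 0")
    case False
    have "smul (pi_gt0 X) (pi_gt0 Y) k = 0"
      by (rule smul_zero_at) (use False in \<open>auto simp: pi_gt0_def mzero_eq\<close>)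
    thus ?thesis using False by (simp add: pi_gt0_def mzero_eq)
  qed (simp add: pi_gt0_def)
qed

lemma pi_ge0_minus: "pi_ge0 (smul (pi_ge0 X - X) (pi_ge0 Y - (Y::('a::comm_ring_1,'n::finite) ser))) = 0"
proof
  fix k show "pi_ge0 (smul (pi_ge0 X - X) (pi_ge0 Y - Y)) k = 0 k"
  proof (cases "k \<ge> 0")
    case True
    have "smul (pi_ge0 X - X) (pi_ge0 Y - Y) k = 0"
      by (rule smul_zero_at) (use True in \<open>auto simp: pi_ge0_def mzero_eq\<close>)
    thus ?thesis using True by (simp add: pi_ge0_def mzero_eq)
  qed (simp add: pi_ge0_def mzero_eq)
qed

lemma pi_gt0_minus: "pi_gt0 (smul (pi_gt0 X - X) (pi_gt0 Y - (Y::('a::comm_ring_1,'n::finite) ser))) = 0"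
proof
  fix k show "pi_gt0 (smul (pi_gt0 X - X) (pi_gt0 Y - Y)) k = 0 k"
  proof (cases "k > 0")
    case True
    have "smul (pi_gt0 X - X) (pi_gt0 Y - Y) k = 0"
      by (rule smul_zero_at) (use True in \<open>auto simp: pi_gt0_def mzero_eq\<close>)
    thus ?thesis using True by (simp add: pi_gt0_def mzero_eq)
  qed (simp add: pi_gt0_def mzero_eq)
qed

lemma add_diff_hom: fixes D :: "'a::comm_ring_1 \<Rightarrow> 'a" assumes "\<And>x y. D (x + y) = D x + D y"
  shows "D (x - y) = D x - D y" "D 0 = 0"
proof -
  have "D x = D (x - y) + D y" using assms[of "x - y" y] by simp
  thus "D (x - y) = D x - D y" by simp
  show "D 0 = 0" using assms[of 0 0] by simp
qed

lemma sder_diff: fixes D :: "'a::comm_ring_1 \<Rightarrow> 'a" assumes "\<And>x y. D (x + y) = D x + D y"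
  shows "sder D (X - Y) = sder D X - sder D (Y::('a,'n) ser)"
  using add_diff_hom[OF assms] by (simp add: sder_def fun_eq_iff)
lemma sder_pi_ge0: fixes D :: "'a::comm_ring_1 \<Rightarrow> 'a" assumes "\<And>x y. D (x + y) = D x + D y"
  shows "sder D (pi_ge0 X) = pi_ge0 (sder D (X::('a,'n) ser))"
  using add_diff_hom[OF assms] by (simp add: sder_def pi_ge0_def mzero_def fun_eq_iff)
lemma sder_pi_gt0: fixes D :: "'a::comm_ring_1 \<Rightarrow> 'a" assumes "\<And>x y. D (x + y) = D x + D y"
  shows "sder D (pi_gt0 X) = pi_gt0 (sder D (X::('a,'n) ser))"
  using add_diff_hom[OF assms] by (simp add: sder_def pi_gt0_def mzero_def fun_eq_iff)
lemma sder_zpow: "sder D (zpow X m) = zpow (sder D X) m"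
  by (simp add: sder_def zpow_def)

lemma zpow_smul2: "smul (zpow X a) (zpow Y b) = zpow (zpow (smul X Y) b) a"
  by (subst zpow_smul_right[of X Y b], subst zpow_smul_left[of X "zpow Y b" a], rule refl)

lemma hier_W:
  assumes "sder D U2 = sbr B U2"
  shows "sder D (zpow U2 m) = smul B (zpow U2 m) - smul (zpow U2 m) B"
proof -
  have "sder D (zpow U2 m) = zpow (smul B U2) m - zpow (smul U2 B) m"
    using assms by (simp add: sder_zpow sbr_eq zpow_diff)
  also have "zpow (smul B U2) m = smul B (zpow U2 m)" by (rule zpow_smul_right)
  also have "zpow (smul U2 B) m = smul (zpow U2 m) B" by (rule zpow_smul_left)
  finally show ?thesis .
qed

lemma comm_zpow:
  assumes "smul U1 U2 = smul U2 U1"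
  shows "smul (zpow U1 a) (zpow U2 b) = smul (zpow U2 b) (zpow U1 a)"
  unfolding zpow_smul2 zpow_zpow assms by (simp add: add.commute)

lemma conj_prod:
  assumes G: "is_ser G" and H: "is_ser H" and C1: "is_ser C1" and C2: "is_ser C2"
    and HG: "smul H G = sone"
  shows "smul (smul (smul G C1) H) (smul (smul G C2) H) = smul (smul G (smul C1 C2)) H"
proof -
  have X1: "is_ser (smul G C1)" using G C1 by (rule is_ser_smul)
  have X2: "is_ser (smul G C2)" using G C2 by (rule is_ser_smul)
  have "smul (smul (smul G C1) H) (smul (smul G C2) H)
      = smul (smul G C1) (smul H (smul (smul G C2) H))"
    using X1 H is_ser_smul[OF X2 H] by (rule smul_assoc)
  also have "smul H (smul (smul G C2) H) = smul (smul H (smul G C2)) H"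
    using H X2 H by (rule smul_assoc[symmetric])
  also have "smul H (smul G C2) = C2"
    unfolding smul_assoc[OF H G C2, symmetric] HG by simp
  also have "smul (smul G C1) (smul C2 H) = smul (smul (smul G C1) C2) H"
    using X1 C2 H by (rule smul_assoc[symmetric])
  also have "smul (smul G C1) C2 = smul G (smul C1 C2)"
    using G C1 C2 by (rule smul_assoc)
  finally show ?thesis .
qed

lemma conj_comm:
  assumes "is_ser G" "is_ser H" "is_ser C1" "is_ser C2" "smul H G = sone"
    and "smul C1 C2 = smul C2 C1"
  shows "smul (smul (smul G C1) H) (smul (smul G C2) H) = smul (smul (smul G C2) H) (smul (smul G C1) H)"
  using conj_prod[OF assms(1-5)] conj_prod[OF assms(1,2,4,3,5)] assms(6) by simp

lemma emb_sum: assumes "calg_hom emb" shows "emb (sum f S) = (\<Sum>i\<in>S. emb (f i))"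
proof -
  have a: "emb (x + y) = emb x + emb y" for x y using assms by (simp add: calg_hom_def)
  have z: "emb 0 = 0" using assms by (simp add: calg_hom_def)
  show ?thesis by (induct S rule: infinite_finite_induct) (simp_all add: a z)
qed

lemma map_mat_mmul: assumes "calg_hom emb"
  shows "map_mat emb (mmul A B) = mmul (map_mat emb A) (map_mat emb B)"
proof -
  have m: "emb (x * y) = emb x * emb y" for x y using assms by (simp add: calg_hom_def)
  show ?thesis unfolding map_mat_def mmul_def fun_eq_iff by (simp add: emb_sum[OF assms] m)
qed

lemma E_comm:
  assumes "maximal_comm_subalg T" "is_basis E r T" "a \<in> {1..r}" "b \<in> {1..r}"
  shows "mmul (E a) (E b) = mmul (E b) (E a)"
proof -
  have inT: "E c \<in> T" if "c \<in> {1..r}" for c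
  proof -
    have L: "lincomb (\<lambda>\<beta>. if \<beta> = c then 1 else 0) E r = E c"
      using that by (simp add: lincomb_def fun_eq_iff if10_mult)
    have "E c \<in> {lincomb c' E r | c'. True}" unfolding mem_Collect_eq
      by (rule exI[of _ "\<lambda>\<beta>. if \<beta> = c then 1 else 0"]) (use L in simp)
    moreover have "T = {lincomb c' E r | c'. True}" using assms(2) unfolding is_basis_def by blast
    ultimately show ?thesis by simp
  qed
  have "\<forall>A\<in>T. \<forall>B\<in>T. mmul A B = mmul B A"
  proof -
    have cs: "comm_subalg T" using assms(1) unfolding maximal_comm_subalg_def by (rule conjunct1)
    show ?thesis using cs unfolding comm_subalg_def by (rule conjunct2[OF conjunct2])
  qed
  from bspec[OF bspec[OF this inT[OF assms(3)]] inT[OF assms(4)]] show ?thesis .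
qed



lemma core:
  fixes D1 D2 :: "'a::comm_ring_1 \<Rightarrow> 'a" and P :: "('a,'n::finite) ser \<Rightarrow> ('a,'n) ser"
  assumes Plin: "\<And>X Y. P (X - Y) = P X - P Y"
  and Pser: "\<And>X. is_ser X \<Longrightarrow> is_ser (P X)"
  and Pplus: "\<And>X Y. P (smul (P X) (P Y)) = smul (P X) (P Y)"
  and Pminus: "\<And>X Y. P (smul (P X - X) (P Y - Y)) = 0"
  and Psder: "\<And>D X. (\<And>x y. D (x + y) = D x + D (y::'a)) \<Longrightarrow> sder D (P X) = P (sder D X)"
  and D1: "\<And>x y. D1 (x + y) = D1 x + D1 y" and D2: "\<And>x y. D2 (x + y) = D2 x + D2 y"
  and U: "is_ser U1" "is_ser U2" and comm: "smul U1 U2 = smul U2 U1"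
  and h1: "sder D1 U2 = sbr (P (zpow U1 e1)) U2"
  and h2: "sder D2 U1 = sbr (P (zpow U2 e2)) U1"
  shows "ssub (ssub (sder D1 (ssub (P (zpow U2 e2)) (zpow U2 e2)))
                   (sder D2 (ssub (P (zpow U1 e1)) (zpow U1 e1))))
              (sbr (ssub (P (zpow U1 e1)) (zpow U1 e1)) (ssub (P (zpow U2 e2)) (zpow U2 e2))) = szero"
  unfolding ssub_eq sbr_eq szero_eq
proof (rule zero_curv[where P = P])
  show "P (X - Y) = P X - P Y" for X Y by (rule Plin)
  show "is_ser X \<Longrightarrow> is_ser (P X)" for X by (rule Pser)
  show "P (smul (P X) (P Y)) = smul (P X) (P Y)" for X Y by (rule Pplus)
  show "P (smul (P X - X) (P Y - Y)) = 0" for X Y by (rule Pminus)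
  show "sder D1 (X - Y) = sder D1 X - sder D1 Y" for X Y by (rule sder_diff[OF D1])
  show "sder D2 (X - Y) = sder D2 X - sder D2 Y" for X Y by (rule sder_diff[OF D2])
  show "sder D1 (P X) = P (sder D1 X)" for X by (rule Psder[OF D1])
  show "sder D2 (P X) = P (sder D2 X)" for X by (rule Psder[OF D2])
  show "is_ser (zpow U1 e1)" "is_ser (zpow U2 e2)" using U by (auto intro: is_ser_zpow)
  show "smul (zpow U1 e1) (zpow U2 e2) = smul (zpow U2 e2) (zpow U1 e1)" by (rule comm_zpow[OF comm])
  show "sder D1 (zpow U2 e2) = smul (P (zpow U1 e1)) (zpow U2 e2) - smul (zpow U2 e2) (P (zpow U1 e1))"
    by (rule hier_W[OF h1])
  show "sder D2 (zpow U1 e1) = smul (P (zpow U2 e2)) (zpow U1 e1) - smul (zpow U1 e1) (P (zpow U2 e2))"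
    by (rule hier_W[OF h2])
qed

lemma deriv_add: "comm_derivations emb d M r \<Longrightarrow> m \<in> M \<Longrightarrow> a \<in> {1..r} \<Longrightarrow> d m a (x + y) = d m a x + d m a y"
  unfolding comm_derivations_def C_derivation_def by blast

theorem corollary2p1:
  fixes emb :: "complex \<Rightarrow> 'a::comm_ring_1"
    and E :: "nat \<Rightarrow> (complex, 'n::finite) mat"
    and r :: nat
  assumes "calg_hom emb"
    and "maximal_comm_subalg T"
    and "is_basis E r T"
  shows
    "(\<forall>(d :: nat \<Rightarrow> nat \<Rightarrow> 'a \<Rightarrow> 'a) (g :: ('a, 'n) ser) ginv.
        comm_derivations emb d UNIV r \<and> G_lt0 g \<and> is_sinv g ginv
        \<and> hierarchy_solution r d (Uop emb E g ginv) \<longrightarrow>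
        (let U = Uop emb E g ginv;
             A = (\<lambda>m \<alpha>. ssub (pi_ge0 (zpow (U \<alpha>) (int m))) (zpow (U \<alpha>) (int m)))
         in \<forall>m1 m2. \<forall>a1\<in>{1..r}. \<forall>a2\<in>{1..r}.
              ssub (ssub (sder (d m1 a1) (A m2 a2)) (sder (d m2 a2) (A m1 a1)))
                   (sbr (A m1 a1) (A m2 a2)) = szero))
   \<and> (\<forall>(d :: nat \<Rightarrow> nat \<Rightarrow> 'a \<Rightarrow> 'a) (K :: ('a, 'n) ser) Kinv.
        comm_derivations emb d {1..} r \<and> G_le0 K \<and> is_sinv K Kinv
        \<and> strict_hierarchy_solution r d (Vop emb E K Kinv) \<longrightarrow>
        (let V = Vop emb E K Kinv;
             D = (\<lambda>m \<beta>. ssub (pi_gt0 (zpow (V \<beta>) (int m - 1))) (zpow (V \<beta>) (int m - 1)))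
         in \<forall>m1\<ge>1. \<forall>m2\<ge>1. \<forall>b1\<in>{1..r}. \<forall>b2\<in>{1..r}.
              ssub (ssub (sder (d m1 b1) (D m2 b2)) (sder (d m2 b2) (D m1 b1)))
                   (sbr (D m1 b1) (D m2 b2)) = szero))"
proof (intro conjI allI impI)
  have Ecomm: "mmul (map_mat emb (E a)) (map_mat emb (E b)) = mmul (map_mat emb (E b)) (map_mat emb (E a))"
    if "a \<in> {1..r}" "b \<in> {1..r}" for a b
    using E_comm[OF assms(2,3) that] map_mat_mmul[OF assms(1)] by metis
  fix d :: "nat \<Rightarrow> nat \<Rightarrow> 'a \<Rightarrow> 'a" and g ginv :: "('a, 'n) ser"
  assume H: "comm_derivations emb d UNIV r \<and> G_lt0 g \<and> is_sinv g ginv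
        \<and> hierarchy_solution r d (Uop emb E g ginv)"
  have cd: "comm_derivations emb d UNIV r" using H by simp
  define U where "U = Uop emb E g ginv"
  have sg: "is_ser g" using H by (intro is_serI[of 0]) (auto simp: G_lt0_def mzero_eq)
  have sgi: "is_ser ginv" and gig: "smul ginv g = sone" using H by (auto simp: is_sinv_def)
  have sU: "is_ser (U a)" for a unfolding U_def Uop_def
    by (intro is_ser_smul sg sgi is_ser_sconst)
  have cU: "smul (U a) (U b) = smul (U b) (U a)" if "a \<in> {1..r}" "b \<in> {1..r}" for a b
    unfolding U_def Uop_def
    by (rule conj_comm[OF sg sgi is_ser_sconst is_ser_sconst gig])
       (simp add: smul_sconst Ecomm[OF that])
  show "let U = Uop emb E g ginv;
             A = (\<lambda>m \<alpha>. ssub (pi_ge0 (zpow (U \<alpha>) (int m))) (zpow (U \<alpha>) (int m)))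
         in \<forall>m1 m2. \<forall>a1\<in>{1..r}. \<forall>a2\<in>{1..r}.
              ssub (ssub (sder (d m1 a1) (A m2 a2)) (sder (d m2 a2) (A m1 a1)))
                   (sbr (A m1 a1) (A m2 a2)) = szero"
    unfolding Let_def U_def[symmetric]
  proof (intro allI ballI)
    fix m1 m2 a1 a2 assume a1: "a1 \<in> {1..r}" and a2: "a2 \<in> {1..r}"
    have hs: "hierarchy_solution r d U" using H by (simp add: U_def)
    show "ssub (ssub (sder (d m1 a1) (ssub (pi_ge0 (zpow (U a2) (int m2))) (zpow (U a2) (int m2))))
                 (sder (d m2 a2) (ssub (pi_ge0 (zpow (U a1) (int m1))) (zpow (U a1) (int m1)))))
          (sbr (ssub (pi_ge0 (zpow (U a1) (int m1))) (zpow (U a1) (int m1)))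
               (ssub (pi_ge0 (zpow (U a2) (int m2))) (zpow (U a2) (int m2)))) = szero"
      using core[where P = pi_ge0, OF pi_ge0_diff pi_ge0_ser pi_ge0_plus pi_ge0_minus sder_pi_ge0
          deriv_add[OF cd UNIV_I a1] deriv_add[OF cd UNIV_I a2] sU sU cU[OF a1 a2]
          hs[unfolded hierarchy_solution_def, rule_format, OF a1 a2]
          hs[unfolded hierarchy_solution_def, rule_format, OF a2 a1]] .
  qed
next
  have Ecomm: "mmul (map_mat emb (E a)) (map_mat emb (E b)) = mmul (map_mat emb (E b)) (map_mat emb (E a))"
    if "a \<in> {1..r}" "b \<in> {1..r}" for a b
    using E_comm[OF assms(2,3) that] map_mat_mmul[OF assms(1)] by metis
  fix d :: "nat \<Rightarrow> nat \<Rightarrow> 'a \<Rightarrow> 'a" and K Kinv :: "('a, 'n) ser"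
  assume H: "comm_derivations emb d {1..} r \<and> G_le0 K \<and> is_sinv K Kinv
        \<and> strict_hierarchy_solution r d (Vop emb E K Kinv)"
  have cd: "comm_derivations emb d {1..} r" using H by simp
  define V where "V = Vop emb E K Kinv"
  have sg: "is_ser K" using H by (intro is_serI[of 0]) (auto simp: G_le0_def mzero_eq)
  have sgi: "is_ser Kinv" and gig: "smul Kinv K = sone" using H by (auto simp: is_sinv_def)
  have sC: "is_ser (zpow (sconst M) 1)" for M by (intro is_ser_zpow is_ser_sconst)
  have sV: "is_ser (V a)" for a unfolding V_def Vop_def
    by (intro is_ser_smul sg sgi sC)
  have cV: "smul (V a) (V b) = smul (V b) (V a)" if "a \<in> {1..r}" "b \<in> {1..r}" for a b
    unfolding V_def Vop_def
    by (rule conj_comm[OF sg sgi sC sC gig])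
       (simp add: zpow_smul2 smul_sconst Ecomm[OF that])
  show "let V = Vop emb E K Kinv;
             D = (\<lambda>m \<beta>. ssub (pi_gt0 (zpow (V \<beta>) (int m - 1))) (zpow (V \<beta>) (int m - 1)))
         in \<forall>m1\<ge>1. \<forall>m2\<ge>1. \<forall>b1\<in>{1..r}. \<forall>b2\<in>{1..r}.
              ssub (ssub (sder (d m1 b1) (D m2 b2)) (sder (d m2 b2) (D m1 b1)))
                   (sbr (D m1 b1) (D m2 b2)) = szero"
    unfolding Let_def V_def[symmetric]
  proof (intro allI impI ballI)
    fix m1 m2 :: nat and a1 a2 assume m1: "m1 \<ge> 1" and m2: "m2 \<ge> 1" and a1: "a1 \<in> {1..r}" and a2: "a2 \<in> {1..r}"
    have hs: "strict_hierarchy_solution r d V" using H by (simp add: V_def)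
    have m1': "m1 \<in> {1..}" and m2': "m2 \<in> {1..}" using m1 m2 by auto
    show "ssub (ssub (sder (d m1 a1) (ssub (pi_gt0 (zpow (V a2) (int m2 - 1))) (zpow (V a2) (int m2 - 1))))
                 (sder (d m2 a2) (ssub (pi_gt0 (zpow (V a1) (int m1 - 1))) (zpow (V a1) (int m1 - 1)))))
          (sbr (ssub (pi_gt0 (zpow (V a1) (int m1 - 1))) (zpow (V a1) (int m1 - 1)))
               (ssub (pi_gt0 (zpow (V a2) (int m2 - 1))) (zpow (V a2) (int m2 - 1)))) = szero"
      using core[where P = pi_gt0, OF pi_gt0_diff pi_gt0_ser pi_gt0_plus pi_gt0_minus sder_pi_gt0
          deriv_add[OF cd m1' a1] deriv_add[OF cd m2' a2] sV sV cV[OF a1 a2]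
          hs[unfolded strict_hierarchy_solution_def, rule_format, OF m1 a1 a2]
          hs[unfolded strict_hierarchy_solution_def, rule_format, OF m2 a2 a1]] .
  qed
qed


end
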